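(* Let $x_1,\dots,x_n\in\mathbb R^d$, with $n\ge d+1$, be such that the $(d+1)\times n$ matrix with columns $\binom{1}{x_1},\dots,\binom{1}{x_n}$ has all maximal minors positive. Let $\pi\in S_n$ be such that the matrix with columns $\binom{1}{x_{\pi(1)}},\dots,\binom{1}{x_{\pi(n)}}$ also has all maximal minors positive. Then the map $x_i\mapsto x_{\pi(i)}$ is a combinatorial automorphism of the polytope $P=\operatorname{conv}(x_1,\dots,x_n)$, i.e. it induces an automorphism of the face lattice of $P$. *)

theory Defs
  imports "HOL-Analysis.Analysis"
begin

definition lift_col :: "real^'d::{finite,linorder} \<Rightarrow> real list" where
  "lift_col v = 1 # map (\<lambda>k. v $ k) (sorted_list_of_set (UNIV :: 'd set))"

definition ldet :: "nat \<Rightarrow> (nat \<Rightarrow> nat \<Rightarrow> real) \<Rightarrow> real" where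
  "ldet m M = (\<Sum>p | p permutes {..<m}. of_int (sign p) * (\<Prod>i<m. M i (p i)))"

definition positive_position :: "nat \<Rightarrow> (nat \<Rightarrow> real^'d::{finite,linorder}) \<Rightarrow> bool" where
  "positive_position n x \<longleftrightarrow>
     (\<forall>s. (\<forall>k < CARD('d) + 1. s k < n) \<and> strict_mono_on {..<CARD('d) + 1} s \<longrightarrow>
        ldet (CARD('d) + 1) (\<lambda>r c. lift_col (x (s c)) ! r) > 0)"

end

theory Submission imports Defs Jordan_Normal_Form.Determinant begin

definition colmat :: "nat \<Rightarrow> (nat \<Rightarrow> real list) \<Rightarrow> real mat" where
  "colmat m cs = mat m m (\<lambda>(r,c). cs c ! r)"

definition lin :: "nat \<Rightarrow> (nat \<Rightarrow> real) \<Rightarrow> real list \<Rightarrow> real" where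
  "lin m v l = (\<Sum>r<m. v r * l ! r)"

lemma colmat_carrier[simp]: "colmat m cs \<in> carrier_mat m m"
  by (simp add: colmat_def)

lemma colmat_dims[simp]: "dim_row (colmat m cs) = m" "dim_col (colmat m cs) = m"
  by (simp_all add: colmat_def)

lemma ldet_colmat: "ldet m (\<lambda>r c. cs c ! r) = det (colmat m cs)"
proof -
  have "det (colmat m cs) = (\<Sum>p \<in> {p. p permutes {..<m}}. of_int (sign p) * (\<Prod>i<m. colmat m cs $$ (i, p i)))"
    unfolding det_def colmat_def by (simp add: atLeast0LessThan)
  also have "\<dots> = ldet m (\<lambda>r c. cs c ! r)"
    unfolding ldet_def
  proof (rule sum.cong[OF refl])
    fix p assume "p \<in> {p. p permutes {..<m}}"
    then have "\<And>i. i < m \<Longrightarrow> p i < m" using permutes_in_image by fastforce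
    then show "of_int (sign p) * (\<Prod>i<m. colmat m cs $$ (i, p i)) = of_int (sign p) * (\<Prod>i<m. cs (p i) ! i)"
      by (simp add: colmat_def)
  qed
  finally show ?thesis by simp
qed

lemma det_zero_dep:
  assumes "\<And>c. c < m \<Longrightarrow> lin m v (cs c) = 0" and "r < m" and "v r \<noteq> 0"
  shows "det (colmat m cs) = 0"
proof -
  let ?A = "colmat m cs"
  have "det ?A = det (?A\<^sup>T)" using det_transpose[OF colmat_carrier[of m cs]] by simp
  also have "det (?A\<^sup>T) = 0"
  proof (subst det_0_iff_vec_prod_zero[of _ m])
    show "?A\<^sup>T \<in> carrier_mat m m" by simp
    show "\<exists>w. w \<in> carrier_vec m \<and> w \<noteq> 0\<^sub>v m \<and> ?A\<^sup>T *\<^sub>v w = 0\<^sub>v m"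
    proof (intro exI conjI)
      show "vec m v \<in> carrier_vec m" by simp
      show "vec m v \<noteq> 0\<^sub>v m"
      proof
        assume "vec m v = 0\<^sub>v m"
        then have "vec_index (vec m v) r = vec_index (0\<^sub>v m) r" by simp
        then show False using assms(2,3) by simp
      qed
      show "?A\<^sup>T *\<^sub>v vec m v = 0\<^sub>v m"
      proof (rule eq_vecI)
        fix c assume c: "c < dim_vec (0\<^sub>v m :: real vec)"
        then have "vec_index (?A\<^sup>T *\<^sub>v vec m v) c = lin m v (cs c)"
          by (auto simp: colmat_def lin_def scalar_prod_def row_def atLeast0LessThan mult.commute intro!: sum.cong)
        then show "vec_index (?A\<^sup>T *\<^sub>v vec m v) c = vec_index (0\<^sub>v m) c"
          using c assms(1) by simp
      qed (simp add: colmat_def)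
    qed
  qed
  finally show ?thesis .
qed

lemma insort_split: "\<exists>q \<le> length xs. insort x xs = take q xs @ x # drop q xs"
proof (induction xs)
  case Nil then show ?case by simp
next
  case (Cons y ys)
  then obtain q where q: "q \<le> length ys" "insort x ys = take q ys @ x # drop q ys" by blast
  show ?case
  proof (cases "x \<le> y")
    case True then show ?thesis by (intro exI[of _ 0]) simp
  next
    case False then show ?thesis using q by (intro exI[of _ "Suc q"]) simp
  qed
qed

lemma ee_props: "distinct (sorted_list_of_set (UNIV :: 'd::{finite,linorder} set))"
  "length (sorted_list_of_set (UNIV :: 'd set)) = CARD('d)"
  "set (sorted_list_of_set (UNIV :: 'd set)) = UNIV"
  by auto

lemma ee_bij: "bij_betw (\<lambda>i. sorted_list_of_set (UNIV :: 'd::{finite,linorder} set) ! i) {..<CARD('d)} UNIV"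
  using bij_betw_nth[of "sorted_list_of_set (UNIV :: 'd set)"] ee_props by auto

lemma length_lift[simp]: "length (lift_col (v::real^'d::{finite,linorder})) = CARD('d) + 1"
  by (simp add: lift_col_def)

lemma lift0[simp]: "lift_col v ! 0 = 1"
  by (simp add: lift_col_def)

lemma liftS: "i < CARD('d) \<Longrightarrow> lift_col (v::real^'d::{finite,linorder}) ! Suc i = v $ (sorted_list_of_set (UNIV :: 'd set) ! i)"
  by (simp add: lift_col_def)

lemma inner_ee: "(a::real^'d::{finite,linorder}) \<bullet> y = (\<Sum>i<CARD('d). a $ (sorted_list_of_set (UNIV :: 'd set) ! i) * y $ (sorted_list_of_set (UNIV :: 'd set) ! i))"
  unfolding inner_vec_def
  using sum.reindex_bij_betw[OF ee_bij, of "\<lambda>k. a $ k * y $ k"] by simp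

lemma lin_lift: "lin (CARD('d) + 1) C (lift_col (y::real^'d::{finite,linorder})) = C 0 + (\<Sum>i<CARD('d). C (Suc i) * y $ (sorted_list_of_set (UNIV :: 'd set) ! i))"
  unfolding lin_def by (simp add: sum.lessThan_Suc_shift liftS del: sum.lessThan_Suc)

lemma lin_affine: "\<exists>(c::real^'d::{finite,linorder}) c0. \<forall>y::real^'d::{finite,linorder}. lin (CARD('d::{finite,linorder}) + 1) C (lift_col y) = c \<bullet> y + c0"
proof -
  let ?e = "sorted_list_of_set (UNIV :: 'd set)"
  define c where "c = (\<chi> k. C (Suc (inv_into {..<CARD('d)} (\<lambda>i. ?e ! i) k)))"
  have "\<And>i. i < CARD('d) \<Longrightarrow> c $ (?e ! i) = C (Suc i)"
    unfolding c_def using bij_betw_inv_into_left[OF ee_bij[where 'd='d]] by simp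
  then have "\<forall>y. lin (CARD('d) + 1) C (lift_col y) = c \<bullet> y + C 0"
    unfolding lin_lift inner_ee by simp
  then show ?thesis by blast
qed

definition wl :: "real^'d::{finite,linorder} \<Rightarrow> real \<Rightarrow> nat \<Rightarrow> real" where
  "wl a b r = (if r = 0 then - b else a $ (sorted_list_of_set (UNIV :: 'd set) ! (r - 1)))"

lemma lin_wl: "lin (CARD('d) + 1) (wl a b) (lift_col (y::real^'d::{finite,linorder})) = a \<bullet> y - b"
  unfolding lin_lift by (simp add: inner_ee wl_def)

lemma lin_wl_Suc: "lin (Suc CARD('d)) (wl a b) (lift_col (y::real^'d::{finite,linorder})) = a \<bullet> y - b"
  using lin_wl[of a b y] by simp

lemma wl_nonzero:
  assumes "(a::real^'d::{finite,linorder}) \<noteq> 0"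
  obtains r where "r < CARD('d) + 1" "wl a b r \<noteq> 0"
proof -
  obtain k where k: "a $ k \<noteq> 0" using assms Finite_Cartesian_Product.vec_eq_iff[of a 0] by auto
  obtain i where i: "i < CARD('d)" "sorted_list_of_set (UNIV :: 'd set) ! i = k"
    using ee_props by (metis in_set_conv_nth UNIV_I)
  show ?thesis using k i by (intro that[of "Suc i"]) (auto simp: wl_def)
qed

lemma lin_scale: "lin m (\<lambda>r. k * C r) l = k * lin m C l"
  by (simp add: lin_def sum_distrib_left mult.assoc)

lemma lin_diff: "lin m (\<lambda>r. C r - D r) l = lin m C l - lin m D l"
  by (simp add: lin_def sum_subtractf left_diff_distrib)

lemma lin_cong: "(\<And>r. r < m \<Longrightarrow> C r = D r) \<Longrightarrow> lin m C l = lin m D l"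
  by (simp add: lin_def)

definition hcols :: "(nat \<Rightarrow> real^'d::{finite,linorder}) \<Rightarrow> nat set \<Rightarrow> real^'d::{finite,linorder} \<Rightarrow> nat \<Rightarrow> real list" where
  "hcols x T y c = (if c = 0 then lift_col y else lift_col (x (sorted_list_of_set T ! (c - 1))))"

definition hT :: "(nat \<Rightarrow> real^'d::{finite,linorder}) \<Rightarrow> nat set \<Rightarrow> real^'d::{finite,linorder} \<Rightarrow> real" where
  "hT x T y = det (colmat (CARD('d::{finite,linorder}) + 1) (hcols x T y))"

definition Dm :: "(nat \<Rightarrow> real^'d::{finite,linorder}) \<Rightarrow> nat set \<Rightarrow> real" where
  "Dm x S = det (colmat (CARD('d::{finite,linorder}) + 1) (\<lambda>c. lift_col (x (sorted_list_of_set S ! c))))"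

definition gq :: "nat set \<Rightarrow> nat \<Rightarrow> nat" where
  "gq T j = (THE q. q < length (sorted_list_of_set (insert j T)) \<and> sorted_list_of_set (insert j T) ! q = j)"

lemma h_lin: "\<exists>C. \<forall>y. hT x T y = lin (CARD('d) + 1) C (lift_col (y::real^'d::{finite,linorder}))"
proof -
  let ?m = "CARD('d) + 1"
  define C where "C i = cofactor (colmat ?m (hcols x T 0)) i 0" for i
  have "hT x T y = lin ?m C (lift_col y)" for y
  proof -
    have "hT x T y = (\<Sum>i<?m. colmat ?m (hcols x T y) $$ (i,0) * cofactor (colmat ?m (hcols x T y)) i 0)"
      unfolding hT_def by (rule laplace_expansion_column) auto
    also have "\<dots> = lin ?m C (lift_col y)"
      unfolding lin_def
    proof (rule sum.cong[OF refl])
      fix i assume i: "i \<in> {..<?m}"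
      have "mat_delete (colmat ?m (hcols x T y)) i 0 = mat_delete (colmat ?m (hcols x T 0)) i 0"
        by (rule eq_matI) (auto simp: mat_delete_def colmat_def hcols_def)
      then have "cofactor (colmat ?m (hcols x T y)) i 0 = C i"
        unfolding C_def cofactor_def by simp
      then show "colmat ?m (hcols x T y) $$ (i,0) * cofactor (colmat ?m (hcols x T y)) i 0 = C i * lift_col y ! i"
        using i by (simp add: colmat_def hcols_def)
    qed
    finally show ?thesis .
  qed
  then show ?thesis by blast
qed

lemma h_zero:
  assumes "finite T" "card T = CARD('d)" "t \<in> T"
  shows "hT (x::nat \<Rightarrow> real^'d::{finite,linorder}) T (x t) = 0"
proof -
  let ?m = "CARD('d) + 1"
  obtain k where k: "k < length (sorted_list_of_set T)" "sorted_list_of_set T ! k = t"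
    using assms by (metis in_set_conv_nth set_sorted_list_of_set)
  have kd: "k < CARD('d)" using k assms by simp
  show ?thesis unfolding hT_def
  proof (rule det_identical_columns[of _ ?m 0 "Suc k"])
    show "col (colmat ?m (hcols x T (x t))) 0 = col (colmat ?m (hcols x T (x t))) (Suc k)"
      using kd k by (intro eq_vecI) (auto simp: colmat_def hcols_def)
  qed (use kd in auto)
qed

lemma gq_eq:
  assumes "finite T" "q < length (sorted_list_of_set (insert j T))" "sorted_list_of_set (insert j T) ! q = j"
  shows "gq T j = q"
  unfolding gq_def
proof (rule the_equality)
  fix q' assume "q' < length (sorted_list_of_set (insert j T)) \<and> sorted_list_of_set (insert j T) ! q' = j"
  then show "q' = q" using assms nth_eq_iff_index_eq[OF distinct_sorted_list_of_set] by metis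
qed (use assms in auto)

lemma h_sign:
  assumes "finite T" "card T = CARD('d)" "j \<notin> T"
  shows "hT (x::nat \<Rightarrow> real^'d::{finite,linorder}) T (x j) = (-1) ^ gq T j * Dm x (insert j T)"
proof -
  let ?m = "CARD('d) + 1"
  let ?st = "sorted_list_of_set T"
  let ?s = "sorted_list_of_set (insert j T)"
  have s: "?s = insort j ?st"
    using assms sorted_list_of_set_insert_remove[of T j] by simp
  obtain q where q: "q \<le> length ?st" "insort j ?st = take q ?st @ j # drop q ?st"
    using insort_split by blast
  have lst: "length ?st = CARD('d)" using assms by simp
  have sq: "?s ! q = j" using s q by (simp add: nth_append)
  have ls: "length ?s = ?m" using s lst by simp
  have gq: "gq T j = q" using gq_eq[OF assms(1), of q j] sq ls q lst by simp
  let ?A = "colmat ?m (\<lambda>c. lift_col (x (?s ! c)))"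
  have qm: "q < ?m" using q lst by simp
  have "swap_col_to_front ?A q = colmat ?m (hcols x T (x j))"
  proof -
    have "swap_col_to_front ?A q = mat ?m ?m (\<lambda>(i,c). if c = 0 then ?A $$ (i,q) else if c \<le> q then ?A $$ (i, c-1) else ?A $$ (i,c))"
      by (rule swap_col_to_front_result[OF colmat_carrier qm])
    also have "\<dots> = colmat ?m (hcols x T (x j))"
    proof (rule eq_matI)
      fix i c assume i: "i < dim_row (colmat ?m (hcols x T (x j)))" and c: "c < dim_col (colmat ?m (hcols x T (x j)))"
      have e1: "?s ! (c - 1) = ?st ! (c - 1)" if "c \<noteq> 0" "c \<le> q"
      proof -
        have "c - 1 < q" "length (take q ?st) = q" using that q by auto
        then show ?thesis using s q by (simp add: nth_append)
      qed
      have e2: "c \<noteq> 0 \<Longrightarrow> \<not> c \<le> q \<Longrightarrow> ?s ! c = ?st ! (c - 1)"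
        using s q c lst by (auto simp: nth_append min_def nth_Cons' split: if_splits)
      show "mat ?m ?m (\<lambda>(i,c). if c = 0 then ?A $$ (i,q) else if c \<le> q then ?A $$ (i, c-1) else ?A $$ (i,c)) $$ (i, c) = colmat ?m (hcols x T (x j)) $$ (i, c)"
        using i c qm e1 e2 sq by (auto simp: colmat_def hcols_def)
    qed auto
    finally show ?thesis .
  qed
  then have "hT x T (x j) = (-1)^q * det ?A"
    unfolding hT_def using swap_col_to_front_det[OF colmat_carrier qm] by metis
  then show ?thesis using gq by (simp add: Dm_def)
qed

lemma imgI: "f a = b \<Longrightarrow> P a \<Longrightarrow> b \<in> f ` {F. P F}"
  by auto

definition Gale :: "nat \<Rightarrow> nat \<Rightarrow> nat set \<Rightarrow> bool" where
  "Gale n d T \<longleftrightarrow> T \<subseteq> {..<n} \<and> card T = d \<and>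
     (\<forall>j k. j < n \<longrightarrow> k < n \<longrightarrow> j \<notin> T \<longrightarrow> k \<notin> T \<longrightarrow> even (gq T j) = even (gq T k))"

context
  fixes x :: "nat \<Rightarrow> real^'d::{finite,linorder}" and n :: nat
  assumes nm: "CARD('d) + 1 \<le> n" and pp: "positive_position n x"
begin

lemma pos_sorted:
  assumes "S \<subseteq> {..<n}" "card S = CARD('d) + 1"
  shows "Dm x S > 0"
proof -
  let ?m = "CARD('d) + 1"
  let ?s = "\<lambda>c. sorted_list_of_set S ! c"
  have fin: "finite S" using assms(1) finite_subset by blast
  have len: "length (sorted_list_of_set S) = ?m" using assms fin by simp
  have A: "\<forall>k < ?m. ?s k < n"
  proof (intro allI impI)
    fix k assume "k < ?m"
    then have "?s k \<in> set (sorted_list_of_set S)" using len by (intro nth_mem) simp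
    then have "?s k \<in> S" using fin by simp
    then show "?s k < n" using assms(1) by auto
  qed
  have B: "strict_mono_on {..<?m} ?s"
  proof (rule strict_mono_onI)
    fix i j assume ij: "i \<in> {..<?m}" "j \<in> {..<?m}" "i < j"
    have sw: "sorted_wrt (<) (sorted_list_of_set S)" by simp
    have "j < length (sorted_list_of_set S)" using ij(2) len by simp
    then show "?s i < ?s j" using sorted_wrt_nth_less[OF sw ij(3)] by blast
  qed
  have "(\<forall>k < ?m. ?s k < n) \<and> strict_mono_on {..<?m} ?s \<longrightarrow> ldet ?m (\<lambda>r c. lift_col (x (?s c)) ! r) > 0"
    using pp unfolding positive_position_def by (rule spec)
  then have "ldet ?m (\<lambda>r c. lift_col (x (?s c)) ! r) > 0" using A B by blast
  then show ?thesis unfolding Dm_def ldet_colmat .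
qed

lemma hyp_contra:
  assumes "S \<subseteq> {..<n}" "card S = CARD('d) + 1" "a \<noteq> 0" "\<And>i. i \<in> S \<Longrightarrow> a \<bullet> x i = b"
  shows False
proof -
  let ?m = "CARD('d) + 1"
  have fin: "finite S" using assms(1) finite_subset by blast
  have len: "length (sorted_list_of_set S) = ?m" using assms fin by simp
  obtain r where r: "r < ?m" "wl a b r \<noteq> 0" using wl_nonzero[OF assms(3)] by blast
  have "Dm x S = 0" unfolding Dm_def
  proof (rule det_zero_dep[where v="wl a b" and r=r])
    fix c assume "c < ?m"
    then have "sorted_list_of_set S ! c \<in> S" using len fin by (metis nth_mem set_sorted_list_of_set)
    then show "lin ?m (wl a b) (lift_col (x (sorted_list_of_set S ! c))) = 0"
      unfolding lin_wl using assms(4) by simp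
  qed (use r in auto)
  then show False using pos_sorted[OF assms(1,2)] by simp
qed

lemma face_hull:
  assumes "F face_of convex hull (x ` {..<n})"
  shows "F = convex hull (x ` {i. i < n \<and> x i \<in> F})"
proof -
  have cpt: "compact (x ` {..<n})" by (simp add: finite_imp_compact)
  obtain S' where S': "S' \<subseteq> x ` {..<n}" "F = convex hull S'"
    by (rule face_of_convex_hull_subset[OF cpt assms])
  have SF: "S' \<subseteq> F" using S'(2) hull_subset[of S' convex] by simp
  have "S' \<subseteq> x ` {i. i < n \<and> x i \<in> F}"
  proof
    fix z assume z: "z \<in> S'"
    then obtain i where "i < n" "z = x i" using S'(1) by auto
    then show "z \<in> x ` {i. i < n \<and> x i \<in> F}" using z SF by auto
  qed
  then have "F \<subseteq> convex hull (x ` {i. i < n \<and> x i \<in> F})"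
    using S' hull_mono by blast
  moreover have "convex hull (x ` {i. i < n \<and> x i \<in> F}) \<subseteq> F"
    using face_of_imp_convex[OF assms] by (intro hull_minimal) auto
  ultimately show ?thesis by blast
qed

lemma sign_eq: "even a = even b \<Longrightarrow> ((-1::real) ^ a) = (-1) ^ b"
  by (simp add: minus_one_power_iff)

lemma gale_face:
  assumes "Gale n (CARD('d)) T"
  shows "\<exists>G. G face_of convex hull (x ` {..<n}) \<and> {i. i < n \<and> x i \<in> G} = T"
proof -
  let ?P = "convex hull (x ` {..<n})"
  have T: "T \<subseteq> {..<n}" "card T = CARD('d)" and par: "\<And>j k. j < n \<Longrightarrow> k < n \<Longrightarrow> j \<notin> T \<Longrightarrow> k \<notin> T \<Longrightarrow> even (gq T j) = even (gq T k)"
    using assms unfolding Gale_def by blast+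
  have fin: "finite T" using T finite_subset by blast
  obtain C where C: "\<forall>y. hT x T y = lin (CARD('d) + 1) C (lift_col y)" using h_lin by blast
  obtain c :: "real^'d::{finite,linorder}" and c0 :: real where cc: "\<forall>y::real^'d::{finite,linorder}. lin (CARD('d) + 1) C (lift_col y) = c \<bullet> y + c0"
    using lin_affine[where 'd='d, of C] by blast
  have h: "hT x T y = c \<bullet> y + c0" for y using C cc by simp
  have "\<not> {..<n} \<subseteq> T"
  proof
    assume "{..<n} \<subseteq> T"
    then have "card {..<n} \<le> card T" using fin card_mono by blast
    then show False using T nm by simp
  qed
  then obtain j0 where j0: "j0 < n" "j0 \<notin> T" by auto
  define \<epsilon> :: real where "\<epsilon> = (-1) ^ gq T j0"
  have eps2: "\<epsilon> * \<epsilon> = 1" unfolding \<epsilon>_def by (simp add: minus_one_power_iff)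
  have pos: "\<epsilon> * hT x T (x j) > 0" if "j < n" "j \<notin> T" for j
  proof -
    have "insert j T \<subseteq> {..<n}" "card (insert j T) = CARD('d) + 1"
      using that T fin by auto
    then have "Dm x (insert j T) > 0" by (rule pos_sorted)
    moreover have "hT x T (x j) = \<epsilon> * Dm x (insert j T)"
      using h_sign[OF fin T(2) that(2)] sign_eq[OF par[OF that(1) j0(1) that(2) j0(2)]] \<epsilon>_def by simp
    ultimately show ?thesis using eps2 by (simp add: mult.assoc[symmetric])
  qed
  have zero: "hT x T (x t) = 0" if "t \<in> T" for t using h_zero[OF fin T(2) that] .
  have ge: "(\<epsilon> *\<^sub>R c) \<bullet> x i \<ge> - (\<epsilon> * c0)" if "i < n" for i
  proof (cases "i \<in> T")
    case True then have "c \<bullet> x i = - c0" using zero[OF True] h[of "x i"] by simp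
    then show ?thesis by simp
  next
    case False then show ?thesis using pos[OF that False] h[of "x i"] by (simp add: algebra_simps)
  qed
  have Psub: "?P \<subseteq> {y. (\<epsilon> *\<^sub>R c) \<bullet> y \<ge> - (\<epsilon> * c0)}"
  proof (rule hull_minimal)
    show "convex {y. (\<epsilon> *\<^sub>R c) \<bullet> y \<ge> - (\<epsilon> * c0)}" by (rule convex_halfspace_ge)
  qed (use ge in auto)
  let ?G = "?P \<inter> {y. (\<epsilon> *\<^sub>R c) \<bullet> y = - (\<epsilon> * c0)}"
  have "?G face_of ?P"
    using Psub by (intro face_of_Int_supporting_hyperplane_ge) auto
  moreover have "{i. i < n \<and> x i \<in> ?G} = T"
  proof (intro Set.set_eqI iffI)
    fix i assume "i \<in> {i. i < n \<and> x i \<in> ?G}"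
    then have "i < n" "\<epsilon> * hT x T (x i) = 0" using h[of "x i"] by (auto simp: algebra_simps)
    then show "i \<in> T" using pos by fastforce
  next
    fix i assume "i \<in> T"
    then have "i < n" "x i \<in> ?P" using T by (auto intro: hull_inc)
    moreover have "c \<bullet> x i = - c0" using zero[OF \<open>i \<in> T\<close>] h[of "x i"] by simp
    ultimately show "i \<in> {i. i < n \<and> x i \<in> ?G}" by simp
  qed
  ultimately show ?thesis by blast
qed

lemma aff_full: "aff_dim (convex hull (x ` {..<n})) = int CARD('d)"
proof (rule ccontr)
  let ?P = "convex hull (x ` {..<n})"
  assume ne: "aff_dim ?P \<noteq> int CARD('d)"
  have "aff_dim ?P \<le> int DIM(real^'d::{finite,linorder})" by (rule aff_dim_le_DIM)
  then have "aff_dim ?P < int DIM(real^'d::{finite,linorder})" using ne by simp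
  then obtain a b where ab: "a \<noteq> 0" "?P \<subseteq> {y. a \<bullet> y = b}" by (rule aff_lowdim_subset_hyperplane)
  show False
  proof (rule hyp_contra[of "{..<CARD('d)+1}" a b])
    show "{..<CARD('d)+1} \<subseteq> {..<n}" using nm by auto
    fix i assume "i \<in> {..<CARD('d)+1}"
    then have "x i \<in> ?P" using nm by (intro hull_inc) auto
    then show "a \<bullet> x i = b" using ab by auto
  qed (use ab in auto)
qed

lemma sign_contra:
  fixes g0 gk h0 hk D0 Dk :: real
  assumes "g0 * hk = h0 * gk" "g0 < 0" "gk < 0" "h0 = (-1)^p * D0" "hk = (-1)^q * Dk" "D0 > 0" "Dk > 0"
  shows "even p = even q"
proof (rule ccontr)
  assume "even p \<noteq> even q"
  then have "(-1::real)^q = - ((-1)^p)" by (auto simp: minus_one_power_iff)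
  then have hk: "hk = - ((-1)^p * Dk)" using assms(5) by simp
  have sq: "((-1::real)^p) * ((-1)^p) = 1" by (simp add: minus_one_power_iff)
  have "h0 * hk = - (D0 * Dk)" using hk assms(4) sq
    by (metis (no_types, lifting) minus_mult_right mult.assoc mult.left_commute mult_1)
  then have "h0 * hk < 0" using assms(6,7) by simp
  moreover have "g0 * (h0 * hk) = h0 * h0 * gk" using assms(1) by (metis mult.assoc mult.left_commute)
  moreover have "h0 \<noteq> 0" using assms(4,6) by simp
  then have "h0 * h0 > 0" by (metis not_real_square_gt_zero)
  then have "h0 * h0 * gk < 0" using assms(3) by (rule mult_pos_neg)
  ultimately show False using assms(2) by (smt (verit) mult_neg_neg)
qed

lemma facet_gale:
  assumes G: "G facet_of convex hull (x ` {..<n})"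
  shows "Gale n (CARD('d)) {i. i < n \<and> x i \<in> G}"
proof -
  let ?P = "convex hull (x ` {..<n})"
  let ?I = "{i. i < n \<and> x i \<in> G}"
  let ?m = "CARD('d) + 1"
  have "polytope ?P" unfolding polytope_def by blast
  then have "polyhedron ?P" by (rule polytope_imp_polyhedron)
  then obtain a b where ab: "a \<noteq> 0" "?P \<subseteq> {y. a \<bullet> y \<le> b}" "G = ?P \<inter> {y. a \<bullet> y = b}"
    using facet_of_polyhedron G by metis
  have Gf: "G face_of ?P" using G by (rule facet_of_imp_face_of)
  have adG: "aff_dim G = int CARD('d) - 1" using G aff_full unfolding facet_of_def by simp
  have "G = convex hull (x ` ?I)" using face_hull[OF Gf] .
  then have "aff_dim G = aff_dim (x ` ?I)" by (metis aff_dim_convex_hull)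
  also have "\<dots> \<le> int (card (x ` ?I)) - 1" by (rule aff_dim_le_card) simp
  also have "\<dots> \<le> int (card ?I) - 1" using card_image_le[of ?I x] by simp
  finally have "CARD('d) \<le> card ?I" using adG by simp
  then obtain T where T: "T \<subseteq> ?I" "card T = CARD('d)" "finite T" by (rule obtain_subset_with_card_n)
  have IT: "?I = T"
  proof (rule ccontr)
    assume "?I \<noteq> T"
    then obtain j where j: "j \<in> ?I" "j \<notin> T" using T by blast
    show False
    proof (rule hyp_contra[of "insert j T" a b])
      show "insert j T \<subseteq> {..<n}" using j T by auto
      show "card (insert j T) = CARD('d) + 1" using j T by simp
      fix i assume "i \<in> insert j T"
      then have "x i \<in> G" using j T by auto
      then show "a \<bullet> x i = b" using ab by auto
    qed (use ab in auto)
  qed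
  have Tn: "T \<subseteq> {..<n}" using T by auto
  have outside: "a \<bullet> x j < b" if "j < n" "j \<notin> T" for j
  proof -
    have "x j \<in> ?P" using that by (intro hull_inc) auto
    moreover have "x j \<notin> G" using that IT by auto
    ultimately show ?thesis using ab by fastforce
  qed
  have onG: "a \<bullet> x t = b" if "t \<in> T" for t using that IT ab by auto
  obtain C where C: "\<forall>y. hT x T y = lin ?m C (lift_col y)" using h_lin by blast
  have Dpos: "Dm x (insert j T) > 0" if "j < n" "j \<notin> T" for j
    using that T Tn by (intro pos_sorted) auto
  have propo: "(a \<bullet> x j - b) * hT x T y = hT x T (x j) * (a \<bullet> y - b)" if j: "j < n" "j \<notin> T" for j y
  proof -
    define g0 where "g0 = a \<bullet> x j - b"
    define h0 where "h0 = hT x T (x j)"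
    have h0nz: "h0 \<noteq> 0" unfolding h0_def using h_sign[OF T(3,2) j(2)] Dpos[OF j] by simp
    define v where "v r = g0 * C r - h0 * wl a b r" for r
    have v0: "v r = 0" if "r < ?m" for r
    proof (rule ccontr)
      assume "v r \<noteq> 0"
      have "det (colmat ?m (hcols x T (x j))) = 0"
      proof (rule det_zero_dep[where v=v and r=r])
        fix c assume c: "c < ?m"
        have e: "lin ?m v l = g0 * lin ?m C l - h0 * lin ?m (wl a b) l" for l
          unfolding v_def lin_diff lin_scale ..
        show "lin ?m v (hcols x T (x j) c) = 0"
        proof (cases "c = 0")
          case True
          then show ?thesis unfolding e using C[rule_format, of "x j"]
            by (simp add: hcols_def lin_wl_Suc g0_def h0_def)
        next
          case False
          let ?t = "sorted_list_of_set T ! (c - 1)"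
          have "?t \<in> T" using False c T by (metis Suc_less_eq add.commute add_diff_inverse_nat less_one nth_mem plus_1_eq_Suc set_sorted_list_of_set length_sorted_list_of_set)
          then show ?thesis unfolding e using C[rule_format, of "x ?t"] False h_zero[OF T(3,2)] onG
            by (simp add: hcols_def lin_wl_Suc)
        qed
      qed (use \<open>v r \<noteq> 0\<close> that in auto)
      then show False using h0nz unfolding h0_def hT_def by simp
    qed
    have "g0 * hT x T y = lin ?m (\<lambda>r. g0 * C r) (lift_col y)" using C lin_scale by metis
    also have "\<dots> = lin ?m (\<lambda>r. h0 * wl a b r) (lift_col y)"
      by (rule lin_cong) (use v0 in \<open>simp add: v_def\<close>)
    also have "\<dots> = h0 * (a \<bullet> y - b)" unfolding lin_scale lin_wl ..
    finally show ?thesis unfolding g0_def h0_def .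
  qed
  have par: "even (gq T j) = even (gq T k)" if "j < n" "k < n" "j \<notin> T" "k \<notin> T" for j k
    by (rule sign_contra[OF propo[OF that(1,3), of "x k"] _ _ h_sign[OF T(3,2) that(3)] h_sign[OF T(3,2) that(4)] Dpos[OF that(1,3)] Dpos[OF that(2,4)]])
       (use outside that in auto)
  show ?thesis unfolding Gale_def IT using Tn T par by blast
qed

lemma K: "(\<lambda>F. {i. i < n \<and> x i \<in> F}) ` {F. F face_of convex hull (x ` {..<n})} =
    {{..<n}, {}} \<union> {\<Inter>\<T> | \<T>. \<T> \<noteq> {} \<and> \<T> \<subseteq> Collect (Gale n (CARD('d)))}"
  (is "?L = ?R")
proof (rule equalityI)
  let ?P = "convex hull (x ` {..<n})"
  let ?I = "\<lambda>F. {i. i < n \<and> x i \<in> F}"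
  have "polytope ?P" unfolding polytope_def by blast
  then have polyP: "polyhedron ?P" by (rule polytope_imp_polyhedron)
  show "?L \<subseteq> ?R"
  proof
    fix J assume "J \<in> ?L"
    then obtain F where F: "F face_of ?P" "J = ?I F" by blast
    show "J \<in> ?R"
    proof (cases "F = {} \<or> F = ?P")
      case True
      then show ?thesis
      proof
        assume "F = {}" then show ?thesis using F by simp
      next
        assume "F = ?P"
        then have "J = {..<n}" using F by (auto intro: hull_inc)
        then show ?thesis by simp
      qed
    next
      case False
      let ?Fs = "{G. G facet_of ?P \<and> F \<subseteq> G}"
      have FI: "F = \<Inter>?Fs" using face_of_polyhedron[OF polyP F(1)] False by blast
      have ne: "?Fs \<noteq> {}" using face_of_polyhedron_subset_facet[OF polyP F(1)] False by blast
      have "J = \<Inter>(?I ` ?Fs)" using F(2) FI ne by auto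
      moreover have "?I ` ?Fs \<subseteq> Collect (Gale n (CARD('d)))" using facet_gale by auto
      ultimately show ?thesis using ne by blast
    qed
  qed
  show "?R \<subseteq> ?L"
  proof
    fix J assume "J \<in> ?R"
    then consider "J = {..<n}" | "J = {}" | \<T> where "\<T> \<noteq> {}" "\<T> \<subseteq> Collect (Gale n (CARD('d)))" "J = \<Inter>\<T>"
      by blast
    then show "J \<in> ?L"
    proof cases
      case 1
      have "?P face_of ?P" by (simp add: face_of_refl)
      moreover have "?I ?P = {..<n}" by (auto intro: hull_inc)
      ultimately show ?thesis unfolding 1 by (rule imgI[rotated])
    next
      case 2
      have "{} face_of ?P" by simp
      moreover have "?I {} = {}" by simp
      ultimately show ?thesis unfolding 2 by (rule imgI[rotated])
    next
      case 3
      have "\<forall>T \<in> \<T>. \<exists>G. G face_of ?P \<and> ?I G = T" using 3 gale_face by blast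
      then obtain Gf where Gf: "\<And>T. T \<in> \<T> \<Longrightarrow> Gf T face_of ?P \<and> ?I (Gf T) = T" by metis
      have "\<Inter>(Gf ` \<T>) face_of ?P" using 3 Gf by (intro face_of_Inter) auto
      moreover have "?I (\<Inter>(Gf ` \<T>)) = J"
      proof -
        have "?I (\<Inter>(Gf ` \<T>)) = \<Inter>((\<lambda>T. ?I (Gf T)) ` \<T>)" using 3 by auto
        also have "\<dots> = \<Inter>\<T>" using Gf by simp
        finally show ?thesis using 3 by simp
      qed
      ultimately show ?thesis by (rule imgI[rotated])
    qed
  qed
qed

lemma mono_I:
  assumes "F face_of convex hull (x ` {..<n})" "G face_of convex hull (x ` {..<n})"
  shows "F \<subseteq> G \<longleftrightarrow> {i. i < n \<and> x i \<in> F} \<subseteq> {i. i < n \<and> x i \<in> G}"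
proof
  assume "{i. i < n \<and> x i \<in> F} \<subseteq> {i. i < n \<and> x i \<in> G}"
  then have "x ` {i. i < n \<and> x i \<in> F} \<subseteq> x ` {i. i < n \<and> x i \<in> G}" by (rule image_mono)
  then have h: "convex hull (x ` {i. i < n \<and> x i \<in> F}) \<subseteq> convex hull (x ` {i. i < n \<and> x i \<in> G})" by (rule hull_mono)
  show "F \<subseteq> G" using ord_eq_le_trans[OF face_hull[OF assms(1)] ord_le_eq_trans[OF h face_hull[OF assms(2), symmetric]]] .
qed auto

end

theorem corollary3p5:
  fixes x :: "nat \<Rightarrow> real^'d::{finite,linorder}" and n :: nat and \<pi> :: "nat \<Rightarrow> nat"
  assumes "n \<ge> CARD('d) + 1"
    and "positive_position n x"
    and "\<pi> permutes {..<n}"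
    and "positive_position n (\<lambda>i. x (\<pi> i))"
  shows "let P = convex hull (x ` {..<n});
             \<phi> = (\<lambda>F. convex hull (x ` \<pi> ` {i \<in> {..<n}. x i \<in> F}))
         in bij_betw \<phi> {F. F face_of P} {F. F face_of P} \<and>
            (\<forall>F G. F face_of P \<longrightarrow> G face_of P \<longrightarrow> (F \<subseteq> G \<longleftrightarrow> \<phi> F \<subseteq> \<phi> G))"
proof -
  let ?P = "convex hull (x ` {..<n})"
  let ?I = "\<lambda>F. {i. i < n \<and> x i \<in> F}"
  let ?I' = "\<lambda>F. {i. i < n \<and> x (\<pi> i) \<in> F}"
  define \<phi> where "\<phi> = (\<lambda>F. convex hull (x ` \<pi> ` {i \<in> {..<n}. x i \<in> F}))"
  have img: "(\<lambda>i. x (\<pi> i)) ` {..<n} = x ` {..<n}"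
    using permutes_image[OF assms(3)] by (metis image_image)
  have KK: "?I ` {F. F face_of ?P} = ?I' ` {F. F face_of ?P}"
    using K[OF assms(1,2)] K[OF assms(1,4)] unfolding img by simp
  have inS: "\<pi> i < n \<longleftrightarrow> i < n" for i
    using permutes_in_image[OF assms(3)] by simp
  have pimg: "\<pi> ` ?I' G = ?I G" for G
  proof
    show "\<pi> ` ?I' G \<subseteq> ?I G" using inS by auto
    show "?I G \<subseteq> \<pi> ` ?I' G"
    proof
      fix j assume j: "j \<in> ?I G"
      have "\<pi> (inv_into UNIV \<pi> j) = j" using permutes_inverses(1)[OF assms(3)] by simp
      moreover then have "inv_into UNIV \<pi> j < n" using inS j by (metis mem_Collect_eq)
      ultimately show "j \<in> \<pi> ` ?I' G" using j by (metis (mono_tags, lifting) image_eqI mem_Collect_eq)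
    qed
  qed
  have fwd: "\<exists>G. G face_of ?P \<and> \<pi> ` ?I F = ?I G" if "F face_of ?P" for F
  proof -
    have "?I F \<in> ?I ` {F. F face_of ?P}" by (rule imgI[of ?I F "?I F" "\<lambda>F. F face_of ?P", OF refl that])
    then have "?I F \<in> ?I' ` {F. F face_of ?P}" unfolding KK .
    then obtain G where G: "?I F = ?I' G" "G \<in> {F. F face_of ?P}" by (rule imageE)
    have "\<pi> ` ?I F = ?I G" unfolding G(1) by (rule pimg)
    then show ?thesis using G(2) by blast
  qed
  have bwd: "\<exists>F. F face_of ?P \<and> \<pi> ` ?I F = ?I G" if "G face_of ?P" for G
  proof -
    have "?I' G \<in> ?I' ` {F. F face_of ?P}" by (rule imgI[of ?I' G "?I' G" "\<lambda>F. F face_of ?P", OF refl that])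
    then have "?I' G \<in> ?I ` {F. F face_of ?P}" unfolding KK .
    then obtain F where F: "?I' G = ?I F" "F \<in> {F. F face_of ?P}" by (rule imageE)
    have "\<pi> ` ?I F = ?I G" unfolding F(1)[symmetric] by (rule pimg)
    then show ?thesis using F(2) by blast
  qed
  have phi: "\<phi> F = convex hull (x ` \<pi> ` ?I F)" for F
    unfolding \<phi>_def by (simp add: lessThan_def)
  have phiG: "\<phi> F face_of ?P \<and> ?I (\<phi> F) = \<pi> ` ?I F" if FF: "F face_of ?P" for F
  proof -
    obtain G where G: "G face_of ?P" "\<pi> ` ?I F = ?I G" using fwd[OF FF] by blast
    have "\<phi> F = convex hull (x ` ?I G)" unfolding phi G(2) ..
    also have "\<dots> = G" using face_hull[OF assms(1,2) G(1)] by (rule sym)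
    finally have "\<phi> F = G" .
    then show ?thesis using G by simp
  qed
  have injpi: "inj_on \<pi> {..<n}" using permutes_inj[OF assms(3)] inj_on_subset by blast
  have Isub: "?I F \<subseteq> {..<n}" for F by auto
  have ord: "F \<subseteq> G \<longleftrightarrow> \<phi> F \<subseteq> \<phi> G" if "F face_of ?P" "G face_of ?P" for F G
  proof -
    have "\<phi> F \<subseteq> \<phi> G \<longleftrightarrow> ?I (\<phi> F) \<subseteq> ?I (\<phi> G)"
      using mono_I[OF assms(1,2)] phiG that by blast
    also have "\<dots> \<longleftrightarrow> \<pi> ` ?I F \<subseteq> \<pi> ` ?I G" using phiG that by simp
    also have "\<dots> \<longleftrightarrow> ?I F \<subseteq> ?I G" using inj_on_image_subset_iff[OF injpi Isub Isub] .
    also have "\<dots> \<longleftrightarrow> F \<subseteq> G" using mono_I[OF assms(1,2) that] by simp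
    finally show ?thesis by simp
  qed
  have bij: "bij_betw \<phi> {F. F face_of ?P} {F. F face_of ?P}"
    unfolding bij_betw_def
  proof
    show "inj_on \<phi> {F. F face_of ?P}"
    proof (rule inj_onI)
      fix F G assume "F \<in> {F. F face_of ?P}" "G \<in> {F. F face_of ?P}" "\<phi> F = \<phi> G"
      then show "F = G" using ord by blast
    qed
    show "\<phi> ` {F. F face_of ?P} = {F. F face_of ?P}"
    proof
      show "\<phi> ` {F. F face_of ?P} \<subseteq> {F. F face_of ?P}" using phiG by blast
      show "{F. F face_of ?P} \<subseteq> \<phi> ` {F. F face_of ?P}"
      proof
        fix G assume G: "G \<in> {F. F face_of ?P}"
        then obtain F where F: "F face_of ?P" "\<pi> ` ?I F = ?I G" using bwd by blast
        have "\<phi> F = convex hull (x ` ?I G)" unfolding phi F(2) ..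
        also have "\<dots> = G" using G by (intro sym[OF face_hull[OF assms(1,2)]]) simp
        finally have "\<phi> F = G" .
        then show "G \<in> \<phi> ` {F. F face_of ?P}" using F by blast
      qed
    qed
  qed
  show ?thesis unfolding Let_def \<phi>_def[symmetric] using bij ord by blast
qed

end
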